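(* Let $n_1,n_2,n_3\ge 1$, $n=n_1+n_2+n_3$, and let $I_1=\{1,\dots,n_1\}$, $I_2=\{n_1+1,\dots,n_1+n_2\}$, $I_3=\{n_1+n_2+1,\dots,n\}$. Consider $G/H=\mathrm{SO}(n)/\mathrm{SO}(n_1)\cdot\mathrm{SO}(n_2)\cdot\mathrm{SO}(n_3)$ (block-diagonal embedding) with $\mathfrak m=\mathfrak m_{12}\oplus\mathfrak m_{13}\oplus\mathfrak m_{23}$, where $\mathfrak m_{ij}=\mathrm{span}\{\xi_{ab}: a\in I_i,\ b\in I_j\}$. Let $X=X_{\mathfrak m_{12}}+X_{\mathfrak m_{13}}+X_{\mathfrak m_{23}}\in\mathfrak m$ with $X_{\mathfrak m_{ij}}\in\mathfrak m_{ij}$. Then $X$ is an equigeodesic vector (with respect to the family of metrics $\Lambda=\lambda_{12}\mathrm{Id}_{\mathfrak m_{12}}+\lambda_{13}\mathrm{Id}_{\mathfrak m_{13}}+\lambda_{23}\mathrm{Id}_{\mathfrak m_{23}}$, $\lambda_{ij}>0$) if and only if $$[X_{\mathfrak m_{12}},X_{\mathfrak m_{13}}]_{\mathfrak m}=0,\quad [X_{\mathfrak m_{12}},X_{\mathfrak m_{23}}]_{\mathfrak m}=0,\quad [X_{\mathfrak m_{13}},X_{\mathfrak m_{23}}]_{\mathfrak m}=0.$$ Equivalently, writing $X=\sum a_{kl}\xi_{kl}$ (sum over pairs $k<l$ lying in different blocks) and forming the real matrices $A=(a_{ij})_{i\in I_1,j\in I_2}$, $C=(a_{ik})_{i\in I_1,k\in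 I_3}$, $D=(a_{jk})_{j\in I_2,k\in I_3}$, $X$ is equigeodesic if and only if $A^{t}C=0$, $AD=0$ and $CD^{t}=0$.
   Context: $E_{ab}$ denotes the $n\times n$ matrix with $1$ in entry $(a,b)$ and $0$ elsewhere, and $\xi_{ab}=E_{ab}-E_{ba}\in\mathfrak{so}(n)$. $\mathfrak m$ is the orthogonal complement of $\mathfrak h=\mathfrak{so}(n_1)\oplus\mathfrak{so}(n_2)\oplus\mathfrak{so}(n_3)$ in $\mathfrak{so}(n)$ with respect to $B(X,Y)=-\mathrm{tr}(XY)$, and $[\cdot,\cdot]_{\mathfrak m}$ denotes the $\mathfrak m$-component of the Lie bracket. Given a family of $B$-symmetric positive operators $\Lambda:\mathfrak m\to\mathfrak m$ (invariant metrics), a nonzero $X\in\mathfrak m$ is called an equigeodesic vector if $[X,\Lambda X]_{\mathfrak m}=0$ for every $\Lambda$ in the family (equivalently, $t\mapsto \exp(tX)\cdot eH$ is a geodesic for every such metric). *)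

theory Defs
  imports Complex_Main
begin

text \<open>n x n real matrices are represented as functions nat => nat => real, with
  indices ranging over {1..n}; entries outside {1..n} x {1..n} are required to be 0
  where membership in a subspace is concerned.\<close>

type_synonym rmat = "nat \<Rightarrow> nat \<Rightarrow> real"

definition mmul :: "nat \<Rightarrow> rmat \<Rightarrow> rmat \<Rightarrow> rmat" where
  "mmul n P Q = (\<lambda>i j. \<Sum>k\<in>{1..n}. P i k * Q k j)"

definition lie_br :: "nat \<Rightarrow> rmat \<Rightarrow> rmat \<Rightarrow> rmat" where
  "lie_br n P Q = (\<lambda>i j. mmul n P Q i j - mmul n Q P i j)"

definition blk :: "nat \<Rightarrow> nat \<Rightarrow> nat \<Rightarrow> nat" where
  "blk n1 n2 a = (if a \<le> n1 then 1 else if a \<le> n1 + n2 then 2 else (3::nat))"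

text \<open>Orthogonal projection onto m (w.r.t. B(X,Y) = -tr(XY)): keep the off-diagonal
  blocks, kill the block-diagonal part (which is h) .\<close>
definition proj_m :: "nat \<Rightarrow> nat \<Rightarrow> nat \<Rightarrow> rmat \<Rightarrow> rmat" where
  "proj_m n1 n2 n3 P = (\<lambda>a b.
     if a \<in> {1..n1+n2+n3} \<and> b \<in> {1..n1+n2+n3} \<and> blk n1 n2 a \<noteq> blk n1 n2 b then P a b else 0)"

definition skew_n :: "nat \<Rightarrow> rmat \<Rightarrow> bool" where
  "skew_n n P \<longleftrightarrow> (\<forall>a b. P a b = - P b a) \<and>
     (\<forall>a b. (a \<notin> {1..n} \<or> b \<notin> {1..n}) \<longrightarrow> P a b = 0)"

text \<open>m_ij = span of xi_ab (a in I_i, b in I_j): skew matrices supported on the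
  (I_i x I_j) and (I_j x I_i) blocks.\<close>
definition in_mij :: "nat \<Rightarrow> nat \<Rightarrow> nat \<Rightarrow> nat \<Rightarrow> nat \<Rightarrow> rmat \<Rightarrow> bool" where
  "in_mij n1 n2 n3 i j P \<longleftrightarrow> skew_n (n1+n2+n3) P \<and>
     (\<forall>a b. {blk n1 n2 a, blk n1 n2 b} \<noteq> {i, j} \<longrightarrow> P a b = 0)"

definition in_m :: "nat \<Rightarrow> nat \<Rightarrow> nat \<Rightarrow> rmat \<Rightarrow> bool" where
  "in_m n1 n2 n3 P \<longleftrightarrow> skew_n (n1+n2+n3) P \<and>
     (\<forall>a b. blk n1 n2 a = blk n1 n2 b \<longrightarrow> P a b = 0)"

definition comp_m :: "nat \<Rightarrow> nat \<Rightarrow> nat \<Rightarrow> nat \<Rightarrow> nat \<Rightarrow> rmat \<Rightarrow> rmat" where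
  "comp_m n1 n2 n3 i j P = (\<lambda>a b.
     if a \<in> {1..n1+n2+n3} \<and> b \<in> {1..n1+n2+n3} \<and> {blk n1 n2 a, blk n1 n2 b} = {i, j}
     then P a b else 0)"

definition Lam :: "nat \<Rightarrow> nat \<Rightarrow> nat \<Rightarrow> real \<Rightarrow> real \<Rightarrow> real \<Rightarrow> rmat \<Rightarrow> rmat" where
  "Lam n1 n2 n3 l12 l13 l23 P = (\<lambda>a b.
     l12 * comp_m n1 n2 n3 1 2 P a b + l13 * comp_m n1 n2 n3 1 3 P a b
     + l23 * comp_m n1 n2 n3 2 3 P a b)"

definition equigeodesic :: "nat \<Rightarrow> nat \<Rightarrow> nat \<Rightarrow> rmat \<Rightarrow> bool" where
  "equigeodesic n1 n2 n3 X \<longleftrightarrow> in_m n1 n2 n3 X \<and> X \<noteq> (\<lambda>a b. 0) \<and>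
     (\<forall>l12 l13 l23. l12 > 0 \<and> l13 > 0 \<and> l23 > 0 \<longrightarrow>
        proj_m n1 n2 n3 (lie_br (n1+n2+n3) X (Lam n1 n2 n3 l12 l13 l23 X)) = (\<lambda>a b. 0))"

end

theory Submission
  imports Defs
begin

lemma mij_zero: "in_mij n1 n2 n3 i j P \<Longrightarrow> {blk n1 n2 a, blk n1 n2 b} \<noteq> {i,j} \<Longrightarrow> P a b = 0"
  unfolding in_mij_def by blast

lemma mij_skew: "in_mij n1 n2 n3 i j P \<Longrightarrow> P a b = - P b a"
  unfolding in_mij_def skew_n_def by blast

lemma mij_out: "in_mij n1 n2 n3 i j P \<Longrightarrow> a \<notin> {1..n1+n2+n3} \<or> b \<notin> {1..n1+n2+n3} \<Longrightarrow> P a b = 0"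
  unfolding in_mij_def skew_n_def by blast

lemma mij_sym: "in_mij n1 n2 n3 i j P \<Longrightarrow> in_mij n1 n2 n3 j i P"
  by (simp add: in_mij_def insert_commute)

lemma sum_zero1:
  assumes P: "in_mij n1 n2 n3 i j P" and Q: "in_mij n1 n2 n3 j k Q"
    and d: "i \<noteq> j" "j \<noteq> k" "i \<noteq> k"
    and nc: "\<not> (blk n1 n2 a = i \<and> blk n1 n2 b = k)"
  shows "(\<Sum>m\<in>S. P a m * Q m b) = 0"
proof (rule sum.neutral, rule ballI)
  fix m
  show "P a m * Q m b = 0"
  proof (rule ccontr)
    assume "P a m * Q m b \<noteq> 0"
    then have "P a m \<noteq> 0" "Q m b \<noteq> 0" by auto
    then have "{blk n1 n2 a, blk n1 n2 m} = {i,j}" "{blk n1 n2 m, blk n1 n2 b} = {j,k}"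
      using mij_zero[OF P] mij_zero[OF Q] by blast+
    then show False using d nc by (auto simp: doubleton_eq_iff)
  qed
qed

lemma sum_out:
  assumes P: "in_mij n1 n2 n3 i j P" and Q: "in_mij n1 n2 n3 j k Q"
    and o: "a \<notin> {1..n1+n2+n3} \<or> b \<notin> {1..n1+n2+n3}"
  shows "(\<Sum>m\<in>S. P a m * Q m b) = 0"
proof (rule sum.neutral, rule ballI)
  fix m
  show "P a m * Q m b = 0"
    using o mij_out[OF P, of a m] mij_out[OF Q, of m b] by auto
qed

lemma br_formula:
  assumes P: "in_mij n1 n2 n3 i j P" and Q: "in_mij n1 n2 n3 j k Q"
    and d: "i \<noteq> j" "j \<noteq> k" "i \<noteq> k"
  shows "proj_m n1 n2 n3 (lie_br (n1+n2+n3) P Q) a b =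
    (if blk n1 n2 a = i \<and> blk n1 n2 b = k then (\<Sum>m\<in>{1..n1+n2+n3}. P a m * Q m b)
     else if blk n1 n2 a = k \<and> blk n1 n2 b = i then - (\<Sum>m\<in>{1..n1+n2+n3}. Q a m * P m b)
     else 0)"
proof -
  let ?S = "{1..n1+n2+n3}"
  have z1: "\<not> (blk n1 n2 a = i \<and> blk n1 n2 b = k) \<Longrightarrow> (\<Sum>m\<in>?S. P a m * Q m b) = 0"
    by (rule sum_zero1[OF P Q d])
  have z2: "\<not> (blk n1 n2 a = k \<and> blk n1 n2 b = i) \<Longrightarrow> (\<Sum>m\<in>?S. Q a m * P m b) = 0"
    by (rule sum_zero1[OF mij_sym[OF Q] mij_sym[OF P]]) (use d in auto)
  have o1: "a \<notin> ?S \<or> b \<notin> ?S \<Longrightarrow> (\<Sum>m\<in>?S. P a m * Q m b) = 0"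
    by (rule sum_out[OF P Q])
  have o2: "a \<notin> ?S \<or> b \<notin> ?S \<Longrightarrow> (\<Sum>m\<in>?S. Q a m * P m b) = 0"
    by (rule sum_out[OF mij_sym[OF Q] mij_sym[OF P]])
  show ?thesis
    using z1 z2 o1 o2 d unfolding proj_m_def lie_br_def mmul_def
    by (auto simp del: atLeastAtMost_iff)
qed

lemma br_zero_iff:
  assumes P: "in_mij n1 n2 n3 i j P" and Q: "in_mij n1 n2 n3 j k Q"
    and d: "i \<noteq> j" "j \<noteq> k" "i \<noteq> k"
  shows "proj_m n1 n2 n3 (lie_br (n1+n2+n3) P Q) = (\<lambda>a b. 0) \<longleftrightarrow>
    (\<forall>a b. blk n1 n2 a = i \<and> blk n1 n2 b = k \<longrightarrow> (\<Sum>m\<in>{1..n1+n2+n3}. P a m * Q m b) = 0)"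
proof
  assume H: "proj_m n1 n2 n3 (lie_br (n1+n2+n3) P Q) = (\<lambda>a b. 0)"
  show "\<forall>a b. blk n1 n2 a = i \<and> blk n1 n2 b = k \<longrightarrow> (\<Sum>m\<in>{1..n1+n2+n3}. P a m * Q m b) = 0"
  proof (intro allI impI)
    fix a b assume c: "blk n1 n2 a = i \<and> blk n1 n2 b = k"
    have "proj_m n1 n2 n3 (lie_br (n1+n2+n3) P Q) a b = 0" using H by simp
    then show "(\<Sum>m\<in>{1..n1+n2+n3}. P a m * Q m b) = 0"
      using br_formula[OF P Q d, of a b] c by simp
  qed
next
  assume R: "\<forall>a b. blk n1 n2 a = i \<and> blk n1 n2 b = k \<longrightarrow> (\<Sum>m\<in>{1..n1+n2+n3}. P a m * Q m b) = 0"
  show "proj_m n1 n2 n3 (lie_br (n1+n2+n3) P Q) = (\<lambda>a b. 0)"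
  proof (rule ext, rule ext)
    fix a b
    have sk: "(\<Sum>m\<in>{1..n1+n2+n3}. Q a m * P m b) = (\<Sum>m\<in>{1..n1+n2+n3}. P b m * Q m a)"
    proof (rule sum.cong)
      fix m
      show "Q a m * P m b = P b m * Q m a"
        using mij_skew[OF Q, of a m] mij_skew[OF P, of m b] by simp
    qed simp
    show "proj_m n1 n2 n3 (lie_br (n1+n2+n3) P Q) a b = 0"
      using br_formula[OF P Q d, of a b] R sk d by auto
  qed
qed

lemma support:
  assumes P: "in_mij n1 n2 n3 i j P" and Q: "in_mij n1 n2 n3 j k Q"
    and d: "i \<noteq> j" "j \<noteq> k" "i \<noteq> k"
    and nz: "proj_m n1 n2 n3 (lie_br (n1+n2+n3) P Q) a b \<noteq> 0"
  shows "(blk n1 n2 a = i \<and> blk n1 n2 b = k) \<or> (blk n1 n2 a = k \<and> blk n1 n2 b = i)"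
  using nz br_formula[OF P Q d, of a b] by (auto split: if_splits)


lemma blk_simps:
  "blk n1 n2 a = 1 \<longleftrightarrow> a \<le> n1"
  "blk n1 n2 a = 2 \<longleftrightarrow> n1 < a \<and> a \<le> n1 + n2"
  "blk n1 n2 a = 3 \<longleftrightarrow> n1 + n2 < a"
  by (auto simp: blk_def)

theorem proposition4p1:
  fixes n1 n2 n3 :: nat and X X12 X13 X23 :: rmat
  assumes "n1 \<ge> 1" "n2 \<ge> 1" "n3 \<ge> 1"
    and "in_mij n1 n2 n3 1 2 X12" "in_mij n1 n2 n3 1 3 X13" "in_mij n1 n2 n3 2 3 X23"
    and "X = (\<lambda>a b. X12 a b + X13 a b + X23 a b)"
    and "X \<noteq> (\<lambda>a b. 0)"
  shows "(equigeodesic n1 n2 n3 X \<longleftrightarrow>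
            proj_m n1 n2 n3 (lie_br (n1+n2+n3) X12 X13) = (\<lambda>a b. 0) \<and>
            proj_m n1 n2 n3 (lie_br (n1+n2+n3) X12 X23) = (\<lambda>a b. 0) \<and>
            proj_m n1 n2 n3 (lie_br (n1+n2+n3) X13 X23) = (\<lambda>a b. 0))
       \<and> (equigeodesic n1 n2 n3 X \<longleftrightarrow>
            (\<forall>j\<in>{n1+1..n1+n2}. \<forall>k\<in>{n1+n2+1..n1+n2+n3}.
               (\<Sum>i\<in>{1..n1}. X i j * X i k) = 0) \<and>
            (\<forall>i\<in>{1..n1}. \<forall>k\<in>{n1+n2+1..n1+n2+n3}.
               (\<Sum>j\<in>{n1+1..n1+n2}. X i j * X j k) = 0) \<and>
            (\<forall>i\<in>{1..n1}. \<forall>j\<in>{n1+1..n1+n2}.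
               (\<Sum>k\<in>{n1+n2+1..n1+n2+n3}. X i k * X j k) = 0))"
proof -
  let ?N = "n1+n2+n3"
  let ?b = "blk n1 n2"
  note A12 = assms(4) and A13 = assms(5) and A23 = assms(6)
  note Xd = assms(7)
  have z12: "\<And>a b. {?b a, ?b b} \<noteq> {1,2} \<Longrightarrow> X12 a b = 0" using mij_zero[OF A12] by blast
  have z13: "\<And>a b. {?b a, ?b b} \<noteq> {1,3} \<Longrightarrow> X13 a b = 0" using mij_zero[OF A13] by blast
  have z23: "\<And>a b. {?b a, ?b b} \<noteq> {2,3} \<Longrightarrow> X23 a b = 0" using mij_zero[OF A23] by blast
  define P1 where "P1 = proj_m n1 n2 n3 (lie_br ?N X12 X13)"
  define P2 where "P2 = proj_m n1 n2 n3 (lie_br ?N X12 X23)"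
  define P3 where "P3 = proj_m n1 n2 n3 (lie_br ?N X13 X23)"
  have B1: "in_mij n1 n2 n3 2 1 X12" by (rule mij_sym[OF A12])
  have B3: "in_mij n1 n2 n3 3 2 X23" by (rule mij_sym[OF A23])
  have P1z: "P1 = (\<lambda>a b. 0) \<longleftrightarrow> (\<forall>a b. ?b a = 2 \<and> ?b b = 3 \<longrightarrow> (\<Sum>m\<in>{1..?N}. X12 a m * X13 m b) = 0)"
    unfolding P1_def by (rule br_zero_iff[OF B1 A13]) auto
  have P2z: "P2 = (\<lambda>a b. 0) \<longleftrightarrow> (\<forall>a b. ?b a = 1 \<and> ?b b = 3 \<longrightarrow> (\<Sum>m\<in>{1..?N}. X12 a m * X23 m b) = 0)"
    unfolding P2_def by (rule br_zero_iff[OF A12 A23]) auto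
  have P3z: "P3 = (\<lambda>a b. 0) \<longleftrightarrow> (\<forall>a b. ?b a = 1 \<and> ?b b = 2 \<longrightarrow> (\<Sum>m\<in>{1..?N}. X13 a m * X23 m b) = 0)"
    unfolding P3_def by (rule br_zero_iff[OF A13 B3]) auto
  have S1: "\<And>a b. a \<in> {1..?N} \<Longrightarrow> ?b a \<noteq> 1 \<Longrightarrow> ?b b \<noteq> 1 \<Longrightarrow> X12 a b = 0"
    using z12 by (auto simp: doubleton_eq_iff)
  have C1: "\<And>a b. ?b a = 2 \<Longrightarrow> ?b b = 3 \<Longrightarrow>
      (\<Sum>m\<in>{1..?N}. X12 a m * X13 m b) = - (\<Sum>i\<in>{1..n1}. X i a * X i b)"
  proof -
    fix a b assume ba: "?b a = 2" and bb: "?b b = 3"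
    have "(\<Sum>m\<in>{1..?N}. X12 a m * X13 m b) = (\<Sum>m\<in>{1..n1}. X12 a m * X13 m b)"
    proof (rule sum.mono_neutral_right)
      show "\<forall>m\<in>{1..?N} - {1..n1}. X12 a m * X13 m b = 0"
      proof
        fix m assume "m \<in> {1..?N} - {1..n1}"
        then have "?b m \<noteq> 1" by (auto simp: blk_def)
        then have "X12 a m = 0" using z12 ba by (auto simp: doubleton_eq_iff)
        then show "X12 a m * X13 m b = 0" by simp
      qed
    qed auto
    also have "\<dots> = (\<Sum>i\<in>{1..n1}. - (X i a * X i b))"
    proof (rule sum.cong)
      fix i assume "i \<in> {1..n1}"
      then have bi: "?b i = 1" by (auto simp: blk_def)
      have "X12 a i = - X12 i a" by (rule mij_skew[OF A12])
      moreover have "X13 i a = 0" "X23 i a = 0" "X12 i b = 0" "X23 i b = 0"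
        using z13[of i a] z23[of i a] z12[of i b] z23[of i b] ba bb bi
        by (auto simp: doubleton_eq_iff)
      ultimately show "X12 a i * X13 i b = - (X i a * X i b)" using Xd by simp
    qed simp
    finally show "(\<Sum>m\<in>{1..?N}. X12 a m * X13 m b) = - (\<Sum>i\<in>{1..n1}. X i a * X i b)"
      by (simp add: sum_negf)
  qed
  have C2: "\<And>a b. ?b a = 1 \<Longrightarrow> ?b b = 3 \<Longrightarrow>
      (\<Sum>m\<in>{1..?N}. X12 a m * X23 m b) = (\<Sum>j\<in>{n1+1..n1+n2}. X a j * X j b)"
  proof -
    fix a b assume ba: "?b a = 1" and bb: "?b b = 3"
    have "(\<Sum>m\<in>{1..?N}. X12 a m * X23 m b) = (\<Sum>m\<in>{n1+1..n1+n2}. X12 a m * X23 m b)"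
    proof (rule sum.mono_neutral_right)
      show "\<forall>m\<in>{1..?N} - {n1+1..n1+n2}. X12 a m * X23 m b = 0"
      proof
        fix m assume "m \<in> {1..?N} - {n1+1..n1+n2}"
        then have "?b m \<noteq> 2" by (auto simp: blk_def)
        then have "X12 a m = 0" using z12 ba by (auto simp: doubleton_eq_iff)
        then show "X12 a m * X23 m b = 0" by simp
      qed
    qed auto
    also have "\<dots> = (\<Sum>j\<in>{n1+1..n1+n2}. X a j * X j b)"
    proof (rule sum.cong)
      fix j assume "j \<in> {n1+1..n1+n2}"
      then have bj: "?b j = 2" by (auto simp: blk_def)
      have "X13 a j = 0" "X23 a j = 0" "X12 j b = 0" "X13 j b = 0"
        using z13[of a j] z23[of a j] z12[of j b] z13[of j b] ba bb bj
        by (auto simp: doubleton_eq_iff)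
      then show "X12 a j * X23 j b = X a j * X j b" using Xd by simp
    qed simp
    finally show "(\<Sum>m\<in>{1..?N}. X12 a m * X23 m b) = (\<Sum>j\<in>{n1+1..n1+n2}. X a j * X j b)" .
  qed
  have C3: "\<And>a b. ?b a = 1 \<Longrightarrow> ?b b = 2 \<Longrightarrow>
      (\<Sum>m\<in>{1..?N}. X13 a m * X23 m b) = - (\<Sum>k\<in>{n1+n2+1..?N}. X a k * X b k)"
  proof -
    fix a b assume ba: "?b a = 1" and bb: "?b b = 2"
    have "(\<Sum>m\<in>{1..?N}. X13 a m * X23 m b) = (\<Sum>m\<in>{n1+n2+1..?N}. X13 a m * X23 m b)"
    proof (rule sum.mono_neutral_right)
      show "\<forall>m\<in>{1..?N} - {n1+n2+1..?N}. X13 a m * X23 m b = 0"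
      proof
        fix m assume "m \<in> {1..?N} - {n1+n2+1..?N}"
        then have "?b m \<noteq> 3" by (auto simp: blk_def)
        then have "X13 a m = 0" using z13 ba by (auto simp: doubleton_eq_iff)
        then show "X13 a m * X23 m b = 0" by simp
      qed
    qed auto
    also have "\<dots> = (\<Sum>k\<in>{n1+n2+1..?N}. - (X a k * X b k))"
    proof (rule sum.cong)
      fix k assume "k \<in> {n1+n2+1..?N}"
      then have bk: "?b k = 3" by (auto simp: blk_def)
      have "X23 k b = - X23 b k" by (rule mij_skew[OF A23])
      moreover have "X12 a k = 0" "X23 a k = 0" "X12 b k = 0" "X13 b k = 0"
        using z12[of a k] z23[of a k] z12[of b k] z13[of b k] ba bb bk
        by (auto simp: doubleton_eq_iff)
      ultimately show "X13 a k * X23 k b = - (X a k * X b k)" using Xd by simp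
    qed simp
    finally show "(\<Sum>m\<in>{1..?N}. X13 a m * X23 m b) = - (\<Sum>k\<in>{n1+n2+1..?N}. X a k * X b k)"
      by (simp add: sum_negf)
  qed
  have outs: "\<And>a b P Q i j k. in_mij n1 n2 n3 i j P \<Longrightarrow> in_mij n1 n2 n3 j k Q \<Longrightarrow> b > ?N \<Longrightarrow>
      (\<Sum>m\<in>{1..?N}. P a m * Q m b) = 0"
    by (rule sum_out) auto
  have E1: "P1 = (\<lambda>a b. 0) \<longleftrightarrow> (\<forall>j\<in>{n1+1..n1+n2}. \<forall>k\<in>{n1+n2+1..?N}. (\<Sum>i\<in>{1..n1}. X i j * X i k) = 0)"
    unfolding P1z
  proof (intro iffI ballI allI impI)
    fix j k assume H: "\<forall>a b. ?b a = 2 \<and> ?b b = 3 \<longrightarrow> (\<Sum>m\<in>{1..?N}. X12 a m * X13 m b) = 0"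
      and j: "j \<in> {n1+1..n1+n2}" and k: "k \<in> {n1+n2+1..?N}"
    have bj: "?b j = 2" and bk: "?b k = 3" using j k by (auto simp: blk_def)
    have "(\<Sum>m\<in>{1..?N}. X12 j m * X13 m k) = 0" by (rule H[rule_format]) (simp add: bj bk)
    then show "(\<Sum>i\<in>{1..n1}. X i j * X i k) = 0" using C1[OF bj bk] by simp
  next
    fix a b assume H: "\<forall>j\<in>{n1+1..n1+n2}. \<forall>k\<in>{n1+n2+1..?N}. (\<Sum>i\<in>{1..n1}. X i j * X i k) = 0"
      and c: "?b a = 2 \<and> ?b b = 3"
    show "(\<Sum>m\<in>{1..?N}. X12 a m * X13 m b) = 0"
    proof (cases "b \<le> ?N")
      case True
      then have "a \<in> {n1+1..n1+n2}" "b \<in> {n1+n2+1..?N}" using c True by (simp_all add: blk_simps)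
      then show ?thesis using H C1 c by simp
    next
      case False then show ?thesis using outs[OF B1 A13] by simp
    qed
  qed
  have E2: "P2 = (\<lambda>a b. 0) \<longleftrightarrow> (\<forall>i\<in>{1..n1}. \<forall>k\<in>{n1+n2+1..?N}. (\<Sum>j\<in>{n1+1..n1+n2}. X i j * X j k) = 0)"
    unfolding P2z
  proof
    assume H: "\<forall>a b. ?b a = 1 \<and> ?b b = 3 \<longrightarrow> (\<Sum>m\<in>{1..?N}. X12 a m * X23 m b) = 0"
    show "\<forall>i\<in>{1..n1}. \<forall>k\<in>{n1+n2+1..?N}. (\<Sum>j\<in>{n1+1..n1+n2}. X i j * X j k) = 0"
    proof (intro ballI)
      fix i k assume i: "i \<in> {1..n1}" and k: "k \<in> {n1+n2+1..?N}"
      have bi: "?b i = 1" and bk: "?b k = 3" using i k by (auto simp: blk_def)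
      have "(\<Sum>m\<in>{1..?N}. X12 i m * X23 m k) = 0" by (rule H[rule_format]) (simp add: bi bk)
      then show "(\<Sum>j\<in>{n1+1..n1+n2}. X i j * X j k) = 0" by (rule trans[OF sym[OF C2[OF bi bk]]])
    qed
  next
    assume H: "\<forall>i\<in>{1..n1}. \<forall>k\<in>{n1+n2+1..?N}. (\<Sum>j\<in>{n1+1..n1+n2}. X i j * X j k) = 0"
    show "\<forall>a b. ?b a = 1 \<and> ?b b = 3 \<longrightarrow> (\<Sum>m\<in>{1..?N}. X12 a m * X23 m b) = 0"
    proof (intro allI impI)
      fix a b assume c: "?b a = 1 \<and> ?b b = 3"
      show "(\<Sum>m\<in>{1..?N}. X12 a m * X23 m b) = 0"
      proof (cases "b \<le> ?N \<and> a \<ge> 1")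
        case True
        have "a \<le> n1" "n1 + n2 < b" using c blk_simps(1)[of n1 n2 a] blk_simps(3)[of n1 n2 b] by blast+
        then have am: "a \<in> {1..n1}" and bm: "b \<in> {n1+n2+1..?N}" using True by auto
        have ba: "?b a = 1" and bb: "?b b = 3" using c by auto
        have "(\<Sum>j\<in>{n1+1..n1+n2}. X a j * X j b) = 0" using H am bm by blast
        then show ?thesis by (rule trans[OF C2[OF ba bb]])
      next
        case False
        show ?thesis
        proof (rule sum_out[OF A12 A23])
          show "a \<notin> {1..?N} \<or> b \<notin> {1..?N}" using False by auto
        qed
      qed
    qed
  qed
  have E3: "P3 = (\<lambda>a b. 0) \<longleftrightarrow> (\<forall>i\<in>{1..n1}. \<forall>j\<in>{n1+1..n1+n2}. (\<Sum>k\<in>{n1+n2+1..?N}. X i k * X j k) = 0)"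
    unfolding P3z
  proof
    assume H: "\<forall>a b. ?b a = 1 \<and> ?b b = 2 \<longrightarrow> (\<Sum>m\<in>{1..?N}. X13 a m * X23 m b) = 0"
    show "\<forall>i\<in>{1..n1}. \<forall>j\<in>{n1+1..n1+n2}. (\<Sum>k\<in>{n1+n2+1..?N}. X i k * X j k) = 0"
    proof (intro ballI)
      fix i j assume i: "i \<in> {1..n1}" and j: "j \<in> {n1+1..n1+n2}"
      have bi: "?b i = 1" and bj: "?b j = 2" using i j by (auto simp: blk_def)
      have "(\<Sum>m\<in>{1..?N}. X13 i m * X23 m j) = 0" by (rule H[rule_format]) (simp add: bi bj)
      then have "- (\<Sum>k\<in>{n1+n2+1..?N}. X i k * X j k) = 0" by (rule trans[OF sym[OF C3[OF bi bj]]])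
      then show "(\<Sum>k\<in>{n1+n2+1..?N}. X i k * X j k) = 0" by simp
    qed
  next
    assume H: "\<forall>i\<in>{1..n1}. \<forall>j\<in>{n1+1..n1+n2}. (\<Sum>k\<in>{n1+n2+1..?N}. X i k * X j k) = 0"
    show "\<forall>a b. ?b a = 1 \<and> ?b b = 2 \<longrightarrow> (\<Sum>m\<in>{1..?N}. X13 a m * X23 m b) = 0"
    proof (intro allI impI)
      fix a b assume c: "?b a = 1 \<and> ?b b = 2"
      show "(\<Sum>m\<in>{1..?N}. X13 a m * X23 m b) = 0"
      proof (cases "a \<ge> 1")
        case True
        have "a \<le> n1" "n1 < b \<and> b \<le> n1 + n2" using c blk_simps(1)[of n1 n2 a] blk_simps(2)[of n1 n2 b] by blast+
        then have am: "a \<in> {1..n1}" and bm: "b \<in> {n1+1..n1+n2}" using True by auto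
        have ba: "?b a = 1" and bb: "?b b = 2" using c by auto
        have "(\<Sum>k\<in>{n1+n2+1..?N}. X a k * X b k) = 0" using H am bm by blast
        then show ?thesis using C3[OF ba bb] by simp
      next
        case False
        show ?thesis
        proof (rule sum_out[OF A13 B3])
          show "a \<notin> {1..?N} \<or> b \<notin> {1..?N}" using False by auto
        qed
      qed
    qed
  qed
  have cm12: "comp_m n1 n2 n3 1 2 X = X12"
  proof (rule ext, rule ext)
    fix a b
    show "comp_m n1 n2 n3 1 2 X a b = X12 a b"
      unfolding comp_m_def using Xd z13[of a b] z23[of a b] z12[of a b] mij_out[OF A12, of a b]
      by (auto simp: doubleton_eq_iff)
  qed
  have cm13: "comp_m n1 n2 n3 1 3 X = X13"
  proof (rule ext, rule ext)
    fix a b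
    show "comp_m n1 n2 n3 1 3 X a b = X13 a b"
      unfolding comp_m_def using Xd z13[of a b] z23[of a b] z12[of a b] mij_out[OF A13, of a b]
      by (auto simp: doubleton_eq_iff)
  qed
  have cm23: "comp_m n1 n2 n3 2 3 X = X23"
  proof (rule ext, rule ext)
    fix a b
    show "comp_m n1 n2 n3 2 3 X a b = X23 a b"
      unfolding comp_m_def using Xd z13[of a b] z23[of a b] z12[of a b] mij_out[OF A23, of a b]
      by (auto simp: doubleton_eq_iff)
  qed
  have LB: "lie_br ?N X (Lam n1 n2 n3 l12 l13 l23 X) a b =
     (l13 - l12) * lie_br ?N X12 X13 a b + (l23 - l12) * lie_br ?N X12 X23 a b
     + (l23 - l13) * lie_br ?N X13 X23 a b" for l12 l13 l23 a b
  proof -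
    have "lie_br ?N X (Lam n1 n2 n3 l12 l13 l23 X) a b =
       (\<Sum>m\<in>{1..?N}. X a m * (l12 * X12 m b + l13 * X13 m b + l23 * X23 m b)
          - (l12 * X12 a m + l13 * X13 a m + l23 * X23 a m) * X m b)"
      unfolding lie_br_def mmul_def Lam_def cm12 cm13 cm23 by (simp add: sum_subtractf)
    also have "\<dots> = (\<Sum>m\<in>{1..?N}. (l13 - l12) * (X12 a m * X13 m b - X13 a m * X12 m b)
        + (l23 - l12) * (X12 a m * X23 m b - X23 a m * X12 m b)
        + (l23 - l13) * (X13 a m * X23 m b - X23 a m * X13 m b))"
      by (rule sum.cong) (simp_all add: Xd algebra_simps)
    also have "\<dots> = (l13 - l12) * lie_br ?N X12 X13 a b + (l23 - l12) * lie_br ?N X12 X23 a b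
     + (l23 - l13) * lie_br ?N X13 X23 a b"
      unfolding lie_br_def mmul_def by (simp add: sum.distrib sum_distrib_left sum_subtractf right_diff_distrib)
    finally show ?thesis .
  qed
  have PE: "proj_m n1 n2 n3 (lie_br ?N X (Lam n1 n2 n3 l12 l13 l23 X)) a b =
     (l13 - l12) * P1 a b + (l23 - l12) * P2 a b + (l23 - l13) * P3 a b" for l12 l13 l23 a b
    unfolding P1_def P2_def P3_def proj_m_def LB by simp
  have inm: "in_m n1 n2 n3 X"
    unfolding in_m_def skew_n_def
  proof (intro conjI allI impI)
    fix a b
    show "X a b = - X b a" using Xd mij_skew[OF A12, of a b] mij_skew[OF A13, of a b] mij_skew[OF A23, of a b] by simp
    show "a \<notin> {1..?N} \<or> b \<notin> {1..?N} \<Longrightarrow> X a b = 0"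
      using Xd mij_out[OF A12, of a b] mij_out[OF A13, of a b] mij_out[OF A23, of a b] by simp
    show "?b a = ?b b \<Longrightarrow> X a b = 0"
      using Xd z12[of a b] z13[of a b] z23[of a b] by (auto simp: doubleton_eq_iff)
  qed
  have supp1: "\<And>a b. P1 a b \<noteq> 0 \<Longrightarrow> (?b a = 2 \<and> ?b b = 3) \<or> (?b a = 3 \<and> ?b b = 2)"
    unfolding P1_def by (rule support[OF B1 A13]) auto
  have supp2: "\<And>a b. P2 a b \<noteq> 0 \<Longrightarrow> (?b a = 1 \<and> ?b b = 3) \<or> (?b a = 3 \<and> ?b b = 1)"
    unfolding P2_def by (rule support[OF A12 A23]) auto
  have supp3: "\<And>a b. P3 a b \<noteq> 0 \<Longrightarrow> (?b a = 1 \<and> ?b b = 2) \<or> (?b a = 2 \<and> ?b b = 1)"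
    unfolding P3_def by (rule support[OF A13 B3]) auto
  have EQ: "equigeodesic n1 n2 n3 X \<longleftrightarrow> P1 = (\<lambda>a b. 0) \<and> P2 = (\<lambda>a b. 0) \<and> P3 = (\<lambda>a b. 0)"
  proof
    assume "equigeodesic n1 n2 n3 X"
    then have H: "proj_m n1 n2 n3 (lie_br ?N X (Lam n1 n2 n3 1 2 3 X)) = (\<lambda>a b. 0)"
      unfolding equigeodesic_def by auto
    have H2: "P1 a b + 2 * P2 a b + P3 a b = 0" for a b
      using fun_cong[OF fun_cong[OF H, of a], of b] PE[of 1 2 3 a b] by simp
    have "P1 a b = 0 \<and> P2 a b = 0 \<and> P3 a b = 0" for a b
      using H2[of a b] supp1[of a b] supp2[of a b] supp3[of a b] by fastforce
    then show "P1 = (\<lambda>a b. 0) \<and> P2 = (\<lambda>a b. 0) \<and> P3 = (\<lambda>a b. 0)" by auto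
  next
    assume Z: "P1 = (\<lambda>a b. 0) \<and> P2 = (\<lambda>a b. 0) \<and> P3 = (\<lambda>a b. 0)"
    have "proj_m n1 n2 n3 (lie_br ?N X (Lam n1 n2 n3 l12 l13 l23 X)) = (\<lambda>a b. 0)" for l12 l13 l23
    proof (rule ext, rule ext)
      fix a b show "proj_m n1 n2 n3 (lie_br ?N X (Lam n1 n2 n3 l12 l13 l23 X)) a b = 0"
        using PE[of l12 l13 l23 a b] Z by simp
    qed
    then show "equigeodesic n1 n2 n3 X"
      unfolding equigeodesic_def using inm assms(8) by blast
  qed
  show ?thesis using EQ E1 E2 E3 unfolding P1_def P2_def P3_def by blast
qed

end
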